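(* Let $R$ be a commutative Noetherian ring, $N$ an $R$-module, $M$ a primeful $R$-module having at least one prime submodule, $X=\mathrm{Spec}(M)$, $K\le M$, and $U=X\setminus V(K)$. Then for each $\gamma=(\gamma_{\mathfrak p})_{\mathfrak p\in\mathrm{Supp}(U)}\in\mathcal{A}(N,M)(U)$ there exist $r\in\mathbb{N}$, elements $s_1,\dots,s_r\in (K:M)$ and $m_1,\dots,m_r\in N$ such that $U=\bigcup_{i=1}^r X_{s_i}$ and, for each $i=1,\dots,r$ and each $P\in X_{s_i}$, $\gamma_{(P:M)}=m_i/s_i$ in $N_{(P:M)}$.
   Context: For a submodule $L$ of an $R$-module $M$, $(L:M)=\{r\in R\mid rM\subseteq L\}$. A submodule $P$ of $M$ is prime if $P\neq M$ and whenever $rm\in P$ ($r\in R$, $m\in M$) then $r\in (P:M)$ or $m\in P$. $\mathrm{Spec}(M)$ is the set of prime submodules. $M$ is primeful if $M=0$ or the map $\mathrm{Spec}(M)\to\mathrm{Spec}(R/\mathrm{Ann}(M))$, $P\mapsto (P:M)/\mathrm{Ann}(M)$, is surjective. For $L\le M$, $V(L)=\{P\in X\mid (P:M)\supseteq (L:M)\}$; these are the closed sets of the Zariski topology on $X$. For $r\in R$, $X_r=X\setminus V(rM)$. For open $U\subseteq X$, $\mathrm{Supp}(U)=\{(P:M)\mid P\in U\}$. $\mathcal{A}(N,M)(U)$ is the set of families $(\gamma_{\mathfrak p})_{\mathfrak p\in\mathrm{Supp}(U)}\in\prod_{\mathfrak p\in\mathrm{Supp}(U)}N_{\mathfrak p}$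 such that for each $Q\in U$ there exist an open neighbourhood $W\subseteq U$ of $Q$ and $s\in R$, $m\in N$ with $s\notin (P:M)$ and $\gamma_{(P:M)}=m/s\in N_{(P:M)}$ for every $P\in W$. *)

theory Defs
  imports Complex_Main
begin

text \<open>Conventions: the commutative ring R is a whole type 'r::comm_ring_1; an R-module is
a type 'b::ab_group_add with a scalar multiplication satisfying the axioms of the library
locale module (HOL.Modules); submodules are module.subspace.\<close>

definition ring_ideal :: "'r::comm_ring_1 set \<Rightarrow> bool" where
  "ring_ideal I \<longleftrightarrow> 0 \<in> I \<and> (\<forall>a\<in>I. \<forall>b\<in>I. a + b \<in> I) \<and> (\<forall>r. \<forall>a\<in>I. r * a \<in> I)"

definition prime_ideal :: "'r::comm_ring_1 set \<Rightarrow> bool" where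
  "prime_ideal p \<longleftrightarrow> ring_ideal p \<and> p \<noteq> UNIV \<and> (\<forall>a b. a * b \<in> p \<longrightarrow> a \<in> p \<or> b \<in> p)"

definition noetherian_ring :: "'r::comm_ring_1 itself \<Rightarrow> bool" where
  "noetherian_ring _ \<longleftrightarrow> (\<forall>I::'r set. ring_ideal I \<longrightarrow>
      (\<exists>F. finite F \<and> F \<subseteq> I \<and> I = {\<Sum>a\<in>F. c a * a | c. True}))"

definition colon :: "('r::comm_ring_1 \<Rightarrow> 'm::ab_group_add \<Rightarrow> 'm) \<Rightarrow> 'm set \<Rightarrow> 'r set" where
  "colon sc L = {r. \<forall>x. sc r x \<in> L}"

definition Ann :: "('r::comm_ring_1 \<Rightarrow> 'm::ab_group_add \<Rightarrow> 'm) \<Rightarrow> 'r set" where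
  "Ann sc = colon sc {0}"

definition prime_submodule :: "('r::comm_ring_1 \<Rightarrow> 'm::ab_group_add \<Rightarrow> 'm) \<Rightarrow> 'm set \<Rightarrow> bool" where
  "prime_submodule sc P \<longleftrightarrow> module.subspace sc P \<and> P \<noteq> UNIV \<and>
     (\<forall>r x. sc r x \<in> P \<longrightarrow> r \<in> colon sc P \<or> x \<in> P)"

definition Spec_mod :: "('r::comm_ring_1 \<Rightarrow> 'm::ab_group_add \<Rightarrow> 'm) \<Rightarrow> 'm set set" where
  "Spec_mod sc = {P. prime_submodule sc P}"

text \<open>Primeful: M = 0 or P \<mapsto> (P:M)/Ann(M) from Spec(M) to Spec(R/Ann(M)) is surjective.
 Prime ideals of R/Ann(M) are identified with prime ideals of R containing Ann(M),
 p/Ann(M) \<leftrightarrow> p, so surjectivity says every such p equals (P:M) for some prime P.\<close>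
definition primeful :: "('r::comm_ring_1 \<Rightarrow> 'm::ab_group_add \<Rightarrow> 'm) \<Rightarrow> bool" where
  "primeful sc \<longleftrightarrow> (UNIV::'m set) = {0} \<or>
     (\<forall>p. prime_ideal p \<and> Ann sc \<subseteq> p \<longrightarrow> (\<exists>P\<in>Spec_mod sc. colon sc P = p))"

definition Vset :: "('r::comm_ring_1 \<Rightarrow> 'm::ab_group_add \<Rightarrow> 'm) \<Rightarrow> 'm set \<Rightarrow> 'm set set" where
  "Vset sc L = {P \<in> Spec_mod sc. colon sc L \<subseteq> colon sc P}"

definition zar_open :: "('r::comm_ring_1 \<Rightarrow> 'm::ab_group_add \<Rightarrow> 'm) \<Rightarrow> 'm set set \<Rightarrow> bool" where
  "zar_open sc W \<longleftrightarrow> (\<exists>L. module.subspace sc L \<and> W = Spec_mod sc - Vset sc L)"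

definition Xbasic :: "('r::comm_ring_1 \<Rightarrow> 'm::ab_group_add \<Rightarrow> 'm) \<Rightarrow> 'r \<Rightarrow> 'm set set" where
  "Xbasic sc r = Spec_mod sc - Vset sc (range (sc r))"

definition Supp :: "('r::comm_ring_1 \<Rightarrow> 'm::ab_group_add \<Rightarrow> 'm) \<Rightarrow> 'm set set \<Rightarrow> 'r set set" where
  "Supp sc U = (\<lambda>P. colon sc P) ` U"

text \<open>Localization N_p: the fraction n/s (s \<notin> p) is the equivalence class of (n,s)
 under (n,s) ~ (n',s') iff u(s' n - s n') = 0 for some u \<notin> p.\<close>
definition mfrac :: "('r::comm_ring_1 \<Rightarrow> 'n::ab_group_add \<Rightarrow> 'n) \<Rightarrow> 'r set \<Rightarrow> 'n \<Rightarrow> 'r \<Rightarrow> ('n \<times> 'r) set" where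
  "mfrac scN p n s = {(n', s'). s' \<notin> p \<and> (\<exists>u. u \<notin> p \<and> scN u (scN s' n - scN s n') = 0)}"

definition loc :: "('r::comm_ring_1 \<Rightarrow> 'n::ab_group_add \<Rightarrow> 'n) \<Rightarrow> 'r set \<Rightarrow> ('n \<times> 'r) set set" where
  "loc scN p = {mfrac scN p n s | n s. s \<notin> p}"

definition sections ::
  "('r::comm_ring_1 \<Rightarrow> 'n::ab_group_add \<Rightarrow> 'n) \<Rightarrow> ('r \<Rightarrow> 'm::ab_group_add \<Rightarrow> 'm) \<Rightarrow> 'm set set
    \<Rightarrow> ('r set \<Rightarrow> ('n \<times> 'r) set) set" where
  "sections scN scM U = {\<gamma>. (\<forall>p\<in>Supp scM U. \<gamma> p \<in> loc scN p) \<and>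
     (\<forall>Q\<in>U. \<exists>W. zar_open scM W \<and> Q \<in> W \<and> W \<subseteq> U \<and>
        (\<exists>s n. \<forall>P\<in>W. s \<notin> colon scM P \<and> \<gamma> (colon scM P) = mfrac scN (colon scM P) n s))}"

end

theory Submission
  imports Defs
begin

interpretation rmod: module "(*) :: 'a::comm_ring_1 \<Rightarrow> 'a \<Rightarrow> 'a"
  by unfold_locales (auto simp: algebra_simps)

lemma colon_mult:
  assumes "module sc" "a \<in> colon sc P"
  shows "a * b \<in> colon sc P" "b * a \<in> colon sc P"
proof -
  have "sc (a*b) x \<in> P" for x
  proof -
    have "sc (a*b) x = sc a (sc b x)" by (rule module.scale_scale[OF assms(1), symmetric])
    moreover have "sc a (sc b x) \<in> P" using assms(2) unfolding colon_def by blast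
    ultimately show ?thesis by simp
  qed
  then show "a * b \<in> colon sc P" "b * a \<in> colon sc P"
    unfolding colon_def by (simp_all add: mult.commute)
qed

lemma colon_prime:
  assumes "module sc" "P \<in> Spec_mod sc" "a \<notin> colon sc P" "b \<notin> colon sc P"
  shows "a * b \<notin> colon sc P"
proof
  assume ab: "a * b \<in> colon sc P"
  have pr: "\<forall>r x. sc r x \<in> P \<longrightarrow> r \<in> colon sc P \<or> x \<in> P"
    using assms(2) unfolding Spec_mod_def prime_submodule_def by blast
  have "sc b x \<in> P" for x
  proof -
    have "sc (a*b) x \<in> P" using ab unfolding colon_def by blast
    then have "sc a (sc b x) \<in> P" by (simp only: module.scale_scale[OF assms(1)])
    then show ?thesis using pr assms(3) by blast
  qed
  then show False using assms(4) unfolding colon_def by blast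
qed

lemma Xbasic_iff:
  assumes "module sc"
  shows "P \<in> Xbasic sc r \<longleftrightarrow> P \<in> Spec_mod sc \<and> r \<notin> colon sc P"
proof -
  have "colon sc (range (sc r)) \<subseteq> colon sc P \<longleftrightarrow> r \<in> colon sc P"
  proof
    assume "colon sc (range (sc r)) \<subseteq> colon sc P"
    moreover have "r \<in> colon sc (range (sc r))" unfolding colon_def by blast
    ultimately show "r \<in> colon sc P" by blast
  next
    assume r: "r \<in> colon sc P"
    show "colon sc (range (sc r)) \<subseteq> colon sc P"
    proof
      fix a assume a: "a \<in> colon sc (range (sc r))"
      have "sc a x \<in> P" for x
      proof -
        obtain y where "sc a x = sc r y" using a unfolding colon_def by blast
        then show ?thesis using r unfolding colon_def by simp
      qed
      then show "a \<in> colon sc P" unfolding colon_def by blast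
    qed
  qed
  then show ?thesis unfolding Xbasic_def Vset_def by blast
qed

lemma colon_subspace:
  assumes "module sc" "module.subspace sc P"
  shows "rmod.subspace (colon sc P)"
proof (rule rmod.subspaceI)
  show "0 \<in> colon sc P" using module.subspace_0[OF assms(1,2)]
    unfolding colon_def by (simp add: module.scale_zero_left[OF assms(1)])
  show "x + y \<in> colon sc P" if "x \<in> colon sc P" "y \<in> colon sc P" for x y
  proof -
    have "sc (x+y) z \<in> P" for z
      using that module.subspace_add[OF assms(1,2), of "sc x z" "sc y z"]
      unfolding colon_def by (simp add: module.scale_left_distrib[OF assms(1)])
    then show ?thesis unfolding colon_def by blast
  qed
  show "c * x \<in> colon sc P" if "x \<in> colon sc P" for c x
    using colon_mult[OF assms(1) that] by simp
qed

lemma mfrac_scale: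
  assumes N: "module scN" and t: "t \<notin> p" and pr: "\<And>u v. u \<notin> p \<Longrightarrow> v \<notin> p \<Longrightarrow> u * v \<notin> p"
  shows "mfrac scN p (scN t n) (t * s) = mfrac scN p n s"
proof -
  have key: "scN u (scN b (scN t n) - scN (t*s) a) = scN (u*t) (scN b n - scN s a)" for u b a
  proof -
    have "scN b (scN t n) = scN t (scN b n)" by (rule module.scale_left_commute[OF N])
    moreover have "scN (t*s) a = scN t (scN s a)" by (rule module.scale_scale[OF N, symmetric])
    ultimately have "scN b (scN t n) - scN (t*s) a = scN t (scN b n - scN s a)"
      by (simp add: module.scale_right_diff_distrib[OF N])
    then show ?thesis by (simp add: module.scale_scale[OF N])
  qed
  have "(\<exists>u. u \<notin> p \<and> scN (u*t) (scN b n - scN s a) = 0) \<longleftrightarrow> (\<exists>u. u \<notin> p \<and> scN u (scN b n - scN s a) = 0)" for a b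
  proof
    assume "\<exists>u. u \<notin> p \<and> scN (u*t) (scN b n - scN s a) = 0"
    then show "\<exists>u. u \<notin> p \<and> scN u (scN b n - scN s a) = 0" using pr t by blast
  next
    assume "\<exists>u. u \<notin> p \<and> scN u (scN b n - scN s a) = 0"
    then obtain u where u: "u \<notin> p" "scN u (scN b n - scN s a) = 0" by blast
    have "scN (t*u) (scN b n - scN s a) = scN t (scN u (scN b n - scN s a))"
      by (rule module.scale_scale[OF N, symmetric])
    also have "\<dots> = 0" using u(2) module.scale_zero_right[OF N] by simp
    finally show "\<exists>u. u \<notin> p \<and> scN (u*t) (scN b n - scN s a) = 0"
      using u(1) by (metis mult.commute)
  qed
  then show ?thesis unfolding mfrac_def key by simp
qed

lemma local_basic:
  assumes N: "module scN" and M: "module scM"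
    and Udef: "U = Spec_mod scM - Vset scM K"
    and g: "\<gamma> \<in> sections scN scM U" and Q: "Q \<in> U"
  shows "\<exists>h n. h \<in> colon scM K \<and> h \<notin> colon scM Q \<and> Xbasic scM h \<subseteq> U \<and>
           (\<forall>P\<in>Xbasic scM h. \<gamma> (colon scM P) = mfrac scN (colon scM P) n h)"
proof -
  obtain W s n0 where W: "zar_open scM W" "Q \<in> W" "W \<subseteq> U"
    and Wp: "\<forall>P\<in>W. s \<notin> colon scM P \<and> \<gamma> (colon scM P) = mfrac scN (colon scM P) n0 s"
    using g Q unfolding sections_def by blast
  obtain L where L: "W = Spec_mod scM - Vset scM L" using W(1) unfolding zar_open_def by blast
  have QS: "Q \<in> Spec_mod scM" using Q Udef by blast
  have "\<not> colon scM L \<subseteq> colon scM Q" using W(2) L QS unfolding Vset_def by blast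
  then obtain l where l: "l \<in> colon scM L" "l \<notin> colon scM Q" by blast
  have "\<not> colon scM K \<subseteq> colon scM Q" using Q Udef QS unfolding Vset_def by blast
  then obtain k where k: "k \<in> colon scM K" "k \<notin> colon scM Q" by blast
  have sQ: "s \<notin> colon scM Q" using Wp W(2) by blast
  define t where "t = k * l"
  define h where "h = t * s"
  have hK: "h \<in> colon scM K"
  proof -
    have "k * (l * s) \<in> colon scM K" using colon_mult(1)[OF M k(1)] .
    moreover have "h = k * (l * s)" unfolding h_def t_def by (rule mult.assoc)
    ultimately show ?thesis by (simp only:)
  qed
  have tQ: "t \<notin> colon scM Q" unfolding t_def using colon_prime[OF M QS k(2) l(2)] .
  have hQ: "h \<notin> colon scM Q" unfolding h_def using colon_prime[OF M QS tQ sQ] .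
  have XW: "Xbasic scM h \<subseteq> W"
  proof
    fix P assume P: "P \<in> Xbasic scM h"
    have PS: "P \<in> Spec_mod scM" and hP: "h \<notin> colon scM P" using P Xbasic_iff[OF M, of P h] by simp_all
    have "l \<notin> colon scM P"
    proof
      assume "l \<in> colon scM P"
      then have lk: "l * (k * s) \<in> colon scM P" by (rule colon_mult(1)[OF M])
      have "h = l * (k * s)" unfolding h_def t_def by (metis mult.assoc mult.commute)
      then show False using hP lk by simp
    qed
    then have "P \<notin> Vset scM L" using l(1) unfolding Vset_def by blast
    then show "P \<in> W" using L PS by blast
  qed
  have "\<forall>P\<in>Xbasic scM h. \<gamma> (colon scM P) = mfrac scN (colon scM P) (scN t n0) h"
  proof
    fix P assume P: "P \<in> Xbasic scM h"
    have PS: "P \<in> Spec_mod scM" and hP: "h \<notin> colon scM P" using P Xbasic_iff[OF M, of P h] by simp_all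
    have tP: "t \<notin> colon scM P"
      using colon_mult(1)[OF M, of t P s] hP unfolding h_def by blast
    have "mfrac scN (colon scM P) (scN t n0) (t * s) = mfrac scN (colon scM P) n0 s"
      by (rule mfrac_scale[OF N tP]) (rule colon_prime[OF M PS])
    then show "\<gamma> (colon scM P) = mfrac scN (colon scM P) (scN t n0) h"
      using Wp XW P unfolding h_def by auto
  qed
  then show ?thesis using hK hQ XW W(3) by blast
qed

theorem lemma3p5:
  fixes scN :: "'r::comm_ring_1 \<Rightarrow> 'n::ab_group_add \<Rightarrow> 'n"
    and scM :: "'r \<Rightarrow> 'm::ab_group_add \<Rightarrow> 'm"
    and K :: "'m set" and U :: "'m set set" and \<gamma> :: "'r set \<Rightarrow> ('n \<times> 'r) set"
  assumes "noetherian_ring TYPE('r)"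
    and "module scN" and "module scM"
    and "primeful scM" and "Spec_mod scM \<noteq> {}"
    and "module.subspace scM K"
    and "U = Spec_mod scM - Vset scM K"
    and "\<gamma> \<in> sections scN scM U"
  shows "\<exists>(r::nat) (s::nat \<Rightarrow> 'r) (n::nat \<Rightarrow> 'n).
           (\<forall>i\<in>{1..r}. s i \<in> colon scM K) \<and>
           U = (\<Union>i\<in>{1..r}. Xbasic scM (s i)) \<and>
           (\<forall>i\<in>{1..r}. \<forall>P\<in>Xbasic scM (s i).
               \<gamma> (colon scM P) = mfrac scN (colon scM P) (n i) (s i))"
proof -
  note N = assms(2) and M = assms(3)
  have ex: "\<forall>Q\<in>U. \<exists>p. fst p \<in> colon scM K \<and> fst p \<notin> colon scM Q \<and> Xbasic scM (fst p) \<subseteq> U \<and>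
           (\<forall>P\<in>Xbasic scM (fst p). \<gamma> (colon scM P) = mfrac scN (colon scM P) (snd p) (fst p))"
  proof
    fix Q assume "Q \<in> U"
    from local_basic[OF N M assms(7,8) this] obtain h n0 where
      "h \<in> colon scM K \<and> h \<notin> colon scM Q \<and> Xbasic scM h \<subseteq> U \<and>
           (\<forall>P\<in>Xbasic scM h. \<gamma> (colon scM P) = mfrac scN (colon scM P) n0 h)" by blast
    then show "\<exists>p. fst p \<in> colon scM K \<and> fst p \<notin> colon scM Q \<and> Xbasic scM (fst p) \<subseteq> U \<and>
           (\<forall>P\<in>Xbasic scM (fst p). \<gamma> (colon scM P) = mfrac scN (colon scM P) (snd p) (fst p))"
      by (intro exI[of _ "(h, n0)"]) simp
  qed
  obtain HN where HN: "\<forall>Q\<in>U. fst (HN Q) \<in> colon scM K \<and> fst (HN Q) \<notin> colon scM Q \<and> Xbasic scM (fst (HN Q)) \<subseteq> U \<and>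
           (\<forall>P\<in>Xbasic scM (fst (HN Q)). \<gamma> (colon scM P) = mfrac scN (colon scM P) (snd (HN Q)) (fst (HN Q)))"
    using bchoice[OF ex] by blast
  define H where "H Q = fst (HN Q)" for Q
  define Nf where "Nf Q = snd (HN Q)" for Q
  note HN = HN[folded H_def Nf_def]
  define I where "I = rmod.span (H ` U)"
  have sI: "rmod.subspace I" unfolding I_def by simp
  have "ring_ideal I" unfolding ring_ideal_def
  proof (intro conjI ballI allI)
    show "0 \<in> I" by (rule rmod.subspace_0[OF sI])
    show "a + b \<in> I" if "a \<in> I" "b \<in> I" for a b by (rule rmod.subspace_add[OF sI that])
    show "r * a \<in> I" if "a \<in> I" for r a by (rule rmod.subspace_scale[OF sI that])
  qed
  then have "\<exists>F. finite F \<and> F \<subseteq> I \<and> I = {\<Sum>a\<in>F. c a * a | c. True}"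
    using assms(1) unfolding noetherian_ring_def by (elim allE[of _ I]) (erule mp)
  then obtain F where F: "finite F" "F \<subseteq> I" "I = {\<Sum>a\<in>F. c a * a | c. True}"
    by (elim exE conjE)
  have "\<forall>a\<in>F. \<exists>T. finite T \<and> T \<subseteq> H ` U \<and> a \<in> rmod.span T"
  proof
    fix a assume "a \<in> F"
    then have "a \<in> rmod.span (H ` U)" using F(2) I_def by blast
    then obtain t r where tr: "a = (\<Sum>x\<in>t. r x * x)" "finite t" "t \<subseteq> H ` U"
      unfolding rmod.span_explicit by blast
    have "a \<in> rmod.span t" unfolding rmod.span_explicit using tr by blast
    then show "\<exists>T. finite T \<and> T \<subseteq> H ` U \<and> a \<in> rmod.span T" using tr by blast
  qed
  then obtain Tf where Tf: "\<forall>a\<in>F. finite (Tf a) \<and> Tf a \<subseteq> H ` U \<and> a \<in> rmod.span (Tf a)"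
    by metis
  define T0 where "T0 = (\<Union>a\<in>F. Tf a)"
  have T0: "finite T0" "T0 \<subseteq> H ` U" unfolding T0_def using Tf F(1) by auto
  have FT: "F \<subseteq> rmod.span T0"
  proof
    fix a assume a: "a \<in> F"
    then have "Tf a \<subseteq> T0" unfolding T0_def by blast
    then show "a \<in> rmod.span T0" using Tf a rmod.span_mono by blast
  qed
  have IT: "I \<subseteq> rmod.span T0"
  proof
    fix x assume "x \<in> I"
    then obtain c where x: "x = (\<Sum>a\<in>F. c a * a)" using F(3) by blast
    show "x \<in> rmod.span T0" unfolding x
      by (rule rmod.span_sum) (use FT rmod.span_scale in blast)
  qed
  have HT: "H ` U \<subseteq> rmod.span T0" using IT rmod.span_superset[of "H ` U"] unfolding I_def by blast
  obtain G where G: "G \<subseteq> U" "T0 = H ` G" "finite G"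
    using finite_subset_image[OF T0(1) T0(2)] by blast
  obtain xs where xs: "set xs = G" using finite_list[OF G(3)] by blast
  define r where "r = length xs"
  define s where "s i = H (xs ! (i - 1))" for i
  define n where "n i = Nf (xs ! (i - 1))" for i
  have inG: "xs ! (i - 1) \<in> G" if "i \<in> {1..r}" for i
    using that xs unfolding r_def by (auto intro!: nth_mem)
  have c1: "\<forall>i\<in>{1..r}. s i \<in> colon scM K" using inG G(1) HN unfolding s_def by blast
  have c3: "\<forall>i\<in>{1..r}. \<forall>P\<in>Xbasic scM (s i).
               \<gamma> (colon scM P) = mfrac scN (colon scM P) (n i) (s i)"
    using inG G(1) HN unfolding s_def n_def by blast
  have sub1: "(\<Union>i\<in>{1..r}. Xbasic scM (s i)) \<subseteq> U" using inG G(1) HN unfolding s_def by blast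
  have sub2: "U \<subseteq> (\<Union>i\<in>{1..r}. Xbasic scM (s i))"
  proof
    fix P assume P: "P \<in> U"
    have PS: "P \<in> Spec_mod scM" using P assms(7) by blast
    have HP: "H P \<notin> colon scM P" using HN P by blast
    have "\<exists>Q\<in>G. H Q \<notin> colon scM P"
    proof (rule ccontr)
      assume "\<not> ?thesis"
      then have "T0 \<subseteq> colon scM P" using G(2) by blast
      moreover have "rmod.subspace (colon scM P)"
        using colon_subspace[OF M] PS unfolding Spec_mod_def prime_submodule_def by blast
      ultimately have "rmod.span T0 \<subseteq> colon scM P" by (rule rmod.span_minimal)
      then show False using HT P HP by blast
    qed
    then obtain Q where Q: "Q \<in> G" "H Q \<notin> colon scM P" by blast
    then obtain j where j: "j < length xs" "xs ! j = Q" using xs by (metis in_set_conv_nth)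
    have "Suc j \<in> {1..r}" using j unfolding r_def by simp
    moreover have "P \<in> Xbasic scM (s (Suc j))"
      using Xbasic_iff[OF M] PS Q j unfolding s_def by simp
    ultimately show "P \<in> (\<Union>i\<in>{1..r}. Xbasic scM (s i))" by blast
  qed
  show ?thesis using c1 c3 sub1 sub2 by blast
qed

end
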